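(* Let $\phi\in\mathrm{Aut}_0(H)$. Then $\phi(H(m))\subseteq\sum_{i=0}^mH(i)$ for all $m\geq0$.
   Context: Let $k$ be a field and $0\neq q\in k$ not a root of unity. $H=k_q[x,x^{-1},y]$ is the $k$-algebra generated by $x,x^{-1},y$ with $xx^{-1}=x^{-1}x=1$, $yx=qxy$, a Hopf algebra with $\Delta(x)=x\otimes x$, $\Delta(x^{-1})=x^{-1}\otimes x^{-1}$, $\Delta(y)=y\otimes x+1\otimes y$, $\varepsilon(x)=1$, $\varepsilon(y)=0$; $\{x^ny^m:n\in\mathbb{Z},m\in\mathbb{N}\}$ is a $k$-basis. $H_0=\mathrm{span}\{x^n:n\in\mathbb{Z}\}$ and $H(m)=H_0y^m$. $\mathrm{Aut}_0(H)$ is the group of coalgebra automorphisms $\phi$ of $H$ with $\phi(1)=1$. *)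

theory Defs
  imports Main
begin

(* Elements of H = k_q[x,x^-1,y] are finitely supported coefficient functions
   on the basis x^n y^m, indexed by (n,m) :: int \<times> nat.
   Elements of H \<otimes> H are finitely supported functions on pairs of basis indices
   (basis x^a y^b \<otimes> x^c y^d  <->  ((a,b),(c,d))). *)

definition supp :: "('a \<Rightarrow> 'k::zero) \<Rightarrow> 'a set" where
  "supp f = {a. f a \<noteq> 0}"

definition Hsp :: "(int \<times> nat \<Rightarrow> 'k::field) set" where
  "Hsp = {f. finite (supp f)}"

definition Tsp :: "((int \<times> nat) \<times> (int \<times> nat) \<Rightarrow> 'k::field) set" where
  "Tsp = {t. finite (supp t)}"

definition bas :: "'a \<Rightarrow> 'a \<Rightarrow> 'k::field" where
  "bas a = (\<lambda>b. if b = a then 1 else 0)"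

definition addI :: "int \<times> nat \<Rightarrow> int \<times> nat \<Rightarrow> int \<times> nat" where
  "addI a b = (fst a + fst b, snd a + snd b)"

(* (x^a1 y^a2)(x^b1 y^b2) = q^(a2*b1) x^(a1+b1) y^(a2+b2), from y x = q x y *)
definition tw :: "'k::field \<Rightarrow> int \<times> nat \<Rightarrow> int \<times> nat \<Rightarrow> 'k" where
  "tw q a b = q powi (int (snd a) * fst b)"

definition mulH :: "'k::field \<Rightarrow> (int \<times> nat \<Rightarrow> 'k) \<Rightarrow> (int \<times> nat \<Rightarrow> 'k) \<Rightarrow> (int \<times> nat \<Rightarrow> 'k)" where
  "mulH q f g = (\<lambda>c. \<Sum>a\<in>supp f. \<Sum>b\<in>supp g.
       if addI a b = c then f a * g b * tw q a b else 0)"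

definition mulT :: "'k::field \<Rightarrow> ((int \<times> nat) \<times> (int \<times> nat) \<Rightarrow> 'k)
     \<Rightarrow> ((int \<times> nat) \<times> (int \<times> nat) \<Rightarrow> 'k) \<Rightarrow> ((int \<times> nat) \<times> (int \<times> nat) \<Rightarrow> 'k)" where
  "mulT q s t = (\<lambda>c. \<Sum>p\<in>supp s. \<Sum>p'\<in>supp t.
       if addI (fst p) (fst p') = fst c \<and> addI (snd p) (snd p') = snd c
       then s p * t p' * tw q (fst p) (fst p') * tw q (snd p) (snd p') else 0)"

definition unitT :: "(int \<times> nat) \<times> (int \<times> nat) \<Rightarrow> 'k::field" where
  "unitT = bas ((0,0),(0,0))"

definition powT :: "'k::field \<Rightarrow> ((int \<times> nat) \<times> (int \<times> nat) \<Rightarrow> 'k) \<Rightarrow> nat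
     \<Rightarrow> ((int \<times> nat) \<times> (int \<times> nat) \<Rightarrow> 'k)" where
  "powT q t n = ((mulT q t) ^^ n) unitT"

(* \<Delta>(x) = x \<otimes> x, \<Delta>(x^-1) = x^-1 \<otimes> x^-1, \<Delta>(y) = y \<otimes> x + 1 \<otimes> y *)
definition DeltaX :: "(int \<times> nat) \<times> (int \<times> nat) \<Rightarrow> 'k::field" where
  "DeltaX = bas ((1,0),(1,0))"
definition DeltaXinv :: "(int \<times> nat) \<times> (int \<times> nat) \<Rightarrow> 'k::field" where
  "DeltaXinv = bas ((-1,0),(-1,0))"
definition DeltaY :: "(int \<times> nat) \<times> (int \<times> nat) \<Rightarrow> 'k::field" where
  "DeltaY = (\<lambda>p. bas ((0,1),(1,0)) p + bas ((0,0),(0,1)) p)"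

(* \<Delta>(x^n y^m) = \<Delta>(x)^n \<Delta>(y)^m, \<Delta> being an algebra map *)
definition DeltaB :: "'k::field \<Rightarrow> int \<times> nat \<Rightarrow> ((int \<times> nat) \<times> (int \<times> nat) \<Rightarrow> 'k)" where
  "DeltaB q a = mulT q
     (if fst a \<ge> 0 then powT q DeltaX (nat (fst a)) else powT q DeltaXinv (nat (- fst a)))
     (powT q DeltaY (snd a))"

definition Delta :: "'k::field \<Rightarrow> (int \<times> nat \<Rightarrow> 'k) \<Rightarrow> ((int \<times> nat) \<times> (int \<times> nat) \<Rightarrow> 'k)" where
  "Delta q f = (\<lambda>p. \<Sum>a\<in>supp f. f a * DeltaB q a p)"

definition epsH :: "(int \<times> nat \<Rightarrow> 'k::field) \<Rightarrow> 'k" where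
  "epsH f = (\<Sum>a\<in>supp f. if snd a = 0 then f a else 0)"

definition tmap :: "((int \<times> nat \<Rightarrow> 'k) \<Rightarrow> (int \<times> nat \<Rightarrow> 'k))
     \<Rightarrow> ((int \<times> nat) \<times> (int \<times> nat) \<Rightarrow> 'k::field) \<Rightarrow> ((int \<times> nat) \<times> (int \<times> nat) \<Rightarrow> 'k)" where
  "tmap \<phi> t = (\<lambda>c. \<Sum>p\<in>supp t. t p * \<phi> (bas (fst p)) (fst c) * \<phi> (bas (snd p)) (snd c))"

definition k_linear_on :: "((int \<times> nat \<Rightarrow> 'k) \<Rightarrow> (int \<times> nat \<Rightarrow> 'k::field)) \<Rightarrow> bool" where
  "k_linear_on \<phi> \<longleftrightarrow>
     (\<forall>f\<in>Hsp. \<forall>g\<in>Hsp. \<phi> (\<lambda>a. f a + g a) = (\<lambda>a. \<phi> f a + \<phi> g a)) \<and>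
     (\<forall>f\<in>Hsp. \<forall>c. \<phi> (\<lambda>a. c * f a) = (\<lambda>a. c * \<phi> f a))"

definition Aut0 :: "'k::field \<Rightarrow> ((int \<times> nat \<Rightarrow> 'k) \<Rightarrow> (int \<times> nat \<Rightarrow> 'k)) set" where
  "Aut0 q = {\<phi>. k_linear_on \<phi> \<and> bij_betw \<phi> Hsp Hsp \<and>
      (\<forall>f\<in>Hsp. Delta q (\<phi> f) = tmap \<phi> (Delta q f)) \<and>
      (\<forall>f\<in>Hsp. epsH (\<phi> f) = epsH f) \<and>
      \<phi> (bas (0,0)) = bas (0,0)}"

definition Hdeg :: "nat \<Rightarrow> (int \<times> nat \<Rightarrow> 'k::field) set" where
  "Hdeg m = {f\<in>Hsp. \<forall>a\<in>supp f. snd a = m}"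

definition Hle :: "nat \<Rightarrow> (int \<times> nat \<Rightarrow> 'k::field) set" where
  "Hle m = {f\<in>Hsp. \<forall>a\<in>supp f. snd a \<le> m}"

end

theory Submission
  imports Defs
begin

definition sh :: "(int \<times> nat) \<times> (int \<times> nat) \<Rightarrow> (int \<times> nat) \<times> (int \<times> nat) \<Rightarrow> (int \<times> nat) \<times> (int \<times> nat)" where
  "sh p p' = (addI (fst p) (fst p'), addI (snd p) (snd p'))"

definition degT :: "(int \<times> nat) \<times> (int \<times> nat) \<Rightarrow> nat" where
  "degT p = snd (fst p) + snd (snd p)"

lemma supp_bas[simp]: "supp (bas a :: 'a \<Rightarrow> 'k::field) = {a}"
  by (auto simp: supp_def bas_def)

lemma bas_self[simp]: "bas a a = 1"
  by (simp add: bas_def)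

lemma bas_Hsp: "(bas a :: int \<times> nat \<Rightarrow> 'k::field) \<in> Hsp"
  by (simp add: Hsp_def)

lemma mulT_supp:
  assumes "mulT q s t c \<noteq> 0"
  shows "\<exists>p\<in>supp s. \<exists>p'\<in>supp t. c = sh p p'"
proof (rule ccontr)
  assume "\<not> ?thesis"
  then have "\<forall>p\<in>supp s. \<forall>p'\<in>supp t. \<not> (addI (fst p) (fst p') = fst c \<and> addI (snd p) (snd p') = snd c)"
    by (metis prod.collapse sh_def)
  then have "mulT q s t c = 0" unfolding mulT_def by (intro sum.neutral ballI) auto
  with assms show False by simp
qed

lemma sh_cond: "(addI (fst p) (fst p'') = fst (sh p p') \<and> addI (snd p) (snd p'') = snd (sh p p')) \<longleftrightarrow> p'' = p'"
  by (auto simp: sh_def addI_def prod_eq_iff)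

lemma mulT_bas_val:
  assumes "finite (supp t)"
  shows "mulT q (bas p) t (sh p p') = t p' * tw q (fst p) (fst p') * tw q (snd p) (snd p')"
proof -
  have "mulT q (bas p) t (sh p p') = (\<Sum>p''\<in>supp t. if p'' = p' then t p'' * tw q (fst p) (fst p'') * tw q (snd p) (snd p'') else 0)"
    unfolding mulT_def supp_bas by (simp add: sh_cond cong: if_cong)
  also have "\<dots> = (if p' \<in> supp t then t p' * tw q (fst p) (fst p') * tw q (snd p) (snd p') else 0)"
    using assms by (simp add: sum.delta)
  also have "\<dots> = t p' * tw q (fst p) (fst p') * tw q (snd p) (snd p')"
    by (auto simp: supp_def)
  finally show ?thesis .
qed

lemma mulT_bas_zero:
  assumes "\<forall>p'\<in>supp t. c \<noteq> sh p p'"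
  shows "mulT q (bas p) t c = 0"
  using mulT_supp[of q "bas p" t c] assms by auto

lemma mulT_bas_bas: "mulT q (bas p) (bas p') = (\<lambda>c. if c = sh p p' then tw q (fst p) (fst p') * tw q (snd p) (snd p') else 0)"
proof
  fix c show "mulT q (bas p) (bas p') c = (if c = sh p p' then tw q (fst p) (fst p') * tw q (snd p) (snd p') else 0)"
  proof (cases "c = sh p p'")
    case True then show ?thesis using mulT_bas_val[of "bas p'" q p p'] by simp
  next
    case False then show ?thesis by (simp add: mulT_bas_zero)
  qed
qed

lemma powT_Suc: "powT q t (Suc k) = mulT q t (powT q t k)"
  by (simp add: powT_def)
lemma powT_0: "powT q t 0 = bas ((0,0),(0,0))"
  by (simp add: powT_def unitT_def)

lemma powT_X: "powT q DeltaX k = bas ((int k,0),(int k,0))"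
proof (induction k)
  case 0 then show ?case by (simp add: powT_0)
next
  case (Suc k) then show ?case
    by (simp add: powT_Suc DeltaX_def mulT_bas_bas sh_def addI_def tw_def) (simp add: bas_def add.commute tw_def cong: if_cong)
qed

lemma powT_Xinv: "powT q DeltaXinv k = bas ((- int k,0),(- int k,0))"
proof (induction k)
  case 0 then show ?case by (simp add: powT_0)
next
  case (Suc k) then show ?case
    by (simp add: powT_Suc DeltaXinv_def mulT_bas_bas sh_def addI_def tw_def) (simp add: bas_def add.commute tw_def cong: if_cong)
qed

lemma DeltaB_eq: "DeltaB q a = mulT q (bas ((fst a,0),(fst a,0))) (powT q DeltaY (snd a))"
  by (simp add: DeltaB_def powT_X powT_Xinv)

abbreviation "uu \<equiv> ((0::int,1::nat),(1::int,0::nat))"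
abbreviation "vv \<equiv> ((0::int,0::nat),(0::int,1::nat))"

lemma supp_DeltaY: "supp (DeltaY :: _ \<Rightarrow> 'k::field) = {uu, vv}"
  by (auto simp: DeltaY_def supp_def bas_def)

lemma mulT_DeltaY: "mulT q DeltaY t c = mulT q (bas uu) t c + mulT q (bas vv) t c"
proof -
  have 1: "DeltaY uu = (1::'a::field)" "DeltaY vv = (1::'a)" by (simp_all add: DeltaY_def bas_def)
  show ?thesis unfolding mulT_def supp_DeltaY supp_bas by (simp add: 1 cong: if_cong) (simp add: DeltaY_def bas_def cong: if_cong)
qed


lemma sh_fst: "fst (fst (sh p p')) = fst (fst p) + fst (fst p')"
  by (simp add: sh_def addI_def)
lemma sh_deg: "degT (sh p p') = degT p + degT p'"
  by (simp add: sh_def addI_def degT_def)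

lemma P_supp: "finite (supp (powT q DeltaY k)) \<and> (\<forall>c\<in>supp (powT q DeltaY k). fst (fst c) = 0 \<and> degT c = k)"
proof (induction k)
  case 0 show ?case by (simp add: powT_0 degT_def)
next
  case (Suc k)
  have sub: "supp (powT q DeltaY (Suc k)) \<subseteq> (\<lambda>(p,p'). sh p p') ` ({uu,vv} \<times> supp (powT q DeltaY k))"
  proof
    fix c assume "c \<in> supp (powT q DeltaY (Suc k))"
    then have "mulT q DeltaY (powT q DeltaY k) c \<noteq> 0" by (simp add: supp_def powT_Suc)
    from mulT_supp[OF this, unfolded supp_DeltaY] obtain p p' where "p \<in> {uu,vv}" "p' \<in> supp (powT q DeltaY k)" "c = sh p p'"
      by blast
    then show "c \<in> (\<lambda>(p,p'). sh p p') ` ({uu,vv} \<times> supp (powT q DeltaY k))"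
      by (intro rev_image_eqI[of "(p,p')"]) simp_all
  qed
  have fin: "finite (supp (powT q DeltaY (Suc k)))"
  proof (rule finite_subset[OF sub])
    have "finite (supp (powT q DeltaY k))" using Suc by blast
    then show "finite ((\<lambda>(p,p'). sh p p') ` ({uu,vv} \<times> supp (powT q DeltaY k)))" by simp
  qed
  have "\<forall>c\<in>supp (powT q DeltaY (Suc k)). fst (fst c) = 0 \<and> degT c = Suc k"
  proof
    fix c assume "c \<in> supp (powT q DeltaY (Suc k))"
    with sub have "c \<in> (\<lambda>(p,p'). sh p p') ` ({uu,vv} \<times> supp (powT q DeltaY k))" by (rule subsetD)
    then obtain pp where pp: "pp \<in> {uu,vv} \<times> supp (powT q DeltaY k)" "c = (\<lambda>(p,p'). sh p p') pp" by (rule imageE)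
    obtain p p' where "pp = (p,p')" by (cases pp)
    with pp have "p \<in> {uu,vv}" "p' \<in> supp (powT q DeltaY k)" "c = sh p p'" by auto
    have "fst (fst p) = 0" "degT p = 1" using \<open>p \<in> {uu,vv}\<close> by (auto simp: degT_def)
    moreover have "fst (fst p') = 0" "degT p' = k" using Suc \<open>p' \<in> supp (powT q DeltaY k)\<close> by blast+
    ultimately show "fst (fst c) = 0 \<and> degT c = Suc k" using \<open>c = sh p p'\<close> by (simp add: sh_fst sh_deg)
  qed
  with fin show ?case by blast
qed

lemma P_e: "powT q DeltaY k ((0,0),(0,k)) = 1"
proof (induction k)
  case 0 show ?case by (simp add: powT_0)
next
  case (Suc k)
  have fin: "finite (supp (powT q DeltaY k))" using P_supp by blast
  have a: "mulT q (bas uu) (powT q DeltaY k) ((0,0),(0,Suc k)) = 0"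
    by (rule mulT_bas_zero) (auto simp: sh_def addI_def)
  have c: "((0,0),(0,Suc k)) = sh vv ((0,0),(0,k))" by (simp add: sh_def addI_def)
  have b: "mulT q (bas vv) (powT q DeltaY k) ((0,0),(0,Suc k)) = 1"
    unfolding c by (simp add: mulT_bas_val[OF fin] Suc tw_def)
  show ?case by (simp add: powT_Suc mulT_DeltaY a b del: One_nat_def)
qed

fun cq :: "'k::field \<Rightarrow> nat \<Rightarrow> 'k" where
  "cq q 0 = 1" | "cq q (Suc k) = 1 + q * cq q k"

lemma P_c: "powT q DeltaY (Suc k) ((0,1),(1,k)) = cq q k"
proof (induction k)
  case 0
  have fin: "finite (supp (powT q DeltaY 0))" using P_supp by blast
  have a: "mulT q (bas vv) (powT q DeltaY 0) ((0,1),(1,0)) = 0"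
    by (rule mulT_bas_zero) (auto simp: sh_def addI_def)
  have b0: "mulT q (bas uu) (powT q DeltaY 0) (sh uu ((0,0),(0,0))) = 1"
    by (simp add: mulT_bas_val[OF fin] tw_def) (simp add: powT_0)
  have b: "mulT q (bas uu) (powT q DeltaY 0) ((0,1),(1,0)) = 1"
    using b0 by (simp add: sh_def addI_def)
  show ?case by (simp add: powT_Suc[of q DeltaY 0] mulT_DeltaY a b del: One_nat_def)
next
  case (Suc k)
  have fin: "finite (supp (powT q DeltaY (Suc k)))" using P_supp by blast
  have c1: "((0,1),(1,Suc k)) = sh uu ((0,0),(0,Suc k))" by (simp add: sh_def addI_def)
  have a: "mulT q (bas uu) (powT q DeltaY (Suc k)) ((0,1),(1,Suc k)) = 1"
    unfolding c1 by (simp add: mulT_bas_val[OF fin] tw_def P_e del: One_nat_def)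
  have c2: "((0,1),(1,Suc k)) = sh vv ((0,1),(1,k))" by (simp add: sh_def addI_def)
  have b: "mulT q (bas vv) (powT q DeltaY (Suc k)) ((0,1),(1,Suc k)) = q * cq q k"
    unfolding c2 by (simp add: mulT_bas_val[OF fin] tw_def Suc del: One_nat_def)
  show ?case by (simp add: powT_Suc[of q DeltaY "Suc k"] mulT_DeltaY a b del: One_nat_def)
qed

lemma cq_closed: "(1 - q) * cq q k = 1 - q ^ Suc k"
proof (induction k)
  case 0 show ?case by simp
next
  case (Suc k)
  have "(1 - q) * cq q (Suc k) = (1 - q) + q * ((1 - q) * cq q k)" by (simp add: algebra_simps)
  also have "\<dots> = 1 - q ^ Suc (Suc k)" unfolding Suc by (simp add: algebra_simps)
  finally show ?case .
qed

lemma cq_nz: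
  assumes "\<forall>n::nat. n > 0 \<longrightarrow> q ^ n \<noteq> 1"
  shows "cq q k \<noteq> 0"
proof
  assume "cq q k = 0"
  then have "1 - q ^ Suc k = 0" using cq_closed[of q k] by simp
  with assms show False by (metis eq_iff_diff_eq_0 zero_less_Suc)
qed

lemma DeltaB_supp:
  assumes "DeltaB q a p \<noteq> 0"
  shows "degT p = snd a \<and> fst (fst p) = fst a"
proof -
  from assms mulT_supp[of q "bas ((fst a,0),(fst a,0))" "powT q DeltaY (snd a)" p]
  obtain p' where "p' \<in> supp (powT q DeltaY (snd a))" "p = sh ((fst a,0),(fst a,0)) p'"
    by (auto simp: DeltaB_eq)
  moreover have "degT p' = snd a" "fst (fst p') = 0" using P_supp[of q "snd a"] \<open>p' \<in> _\<close> by blast+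
  ultimately show ?thesis by (simp add: sh_fst sh_deg) (simp add: degT_def)
qed

lemma DeltaB_val: "DeltaB q (n, Suc k) ((n,1),(n+1,k)) = cq q k"
proof -
  have fin: "finite (supp (powT q DeltaY (Suc k)))" using P_supp by blast
  have c: "((n,1),(n+1,k)) = sh ((n,0),(n,0)) ((0,1),(1,k))" by (simp add: sh_def addI_def)
  show ?thesis unfolding DeltaB_eq c by (simp add: mulT_bas_val[OF fin] tw_def P_c del: One_nat_def)
qed

lemma DeltaB_0: "DeltaB q (n, 0) = bas ((n,0),(n,0))"
  by (simp add: DeltaB_eq powT_0 mulT_bas_bas sh_def addI_def tw_def) (simp add: bas_def tw_def cong: if_cong)


lemma Delta_bas: "Delta q (bas a) = DeltaB q a"
  by (simp add: Delta_def fun_eq_iff)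

lemma tmap_bas: "tmap \<phi> (bas p) c = \<phi> (bas (fst p)) (fst c) * \<phi> (bas (snd p)) (snd c)"
  by (simp add: tmap_def)

definition Good :: "nat \<Rightarrow> ((int\<times>nat)\<times>(int\<times>nat) \<Rightarrow> 'k::field) \<Rightarrow> bool" where
  "Good m t \<longleftrightarrow> (\<forall>p\<in>supp t. snd (fst p) = 0 \<or> snd (snd p) < m)"

lemma Down:
  assumes hH: "h \<in> Hsp" and G: "Good m (Delta q h)" and qa: "\<forall>n::nat. n>0 \<longrightarrow> q^n \<noteq> 1"
  shows "h \<in> Hle m"
proof (rule ccontr)
  assume nh: "h \<notin> Hle m"
  have fin: "finite (supp h)" using hH by (simp add: Hsp_def)
  from nh hH obtain b where b: "b \<in> supp h" "snd b > m" by (auto simp: Hle_def)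
  define M where "M = Max (snd ` supp h)"
  have Mge: "\<forall>a\<in>supp h. snd a \<le> M" using fin by (auto simp: M_def)
  have "M \<in> snd ` supp h" using fin b(1) unfolding M_def by (intro Max_in) auto
  then obtain a0 where a0: "a0 \<in> supp h" "snd a0 = M" by auto
  have "M > m" using Mge b by fastforce
  then obtain k where k: "M = Suc k" "k \<ge> m" by (cases M) auto
  define c where "c = ((fst a0, 1::nat), (fst a0 + 1, k))"
  have "Delta q h c = (\<Sum>a\<in>supp h. h a * DeltaB q a c)" by (simp add: Delta_def)
  also have "\<dots> = h a0 * DeltaB q a0 c + (\<Sum>a\<in>supp h - {a0}. h a * DeltaB q a c)"
    using fin a0(1) by (rule sum.remove)
  also have "(\<Sum>a\<in>supp h - {a0}. h a * DeltaB q a c) = 0"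
  proof (rule sum.neutral, rule ballI)
    fix a assume a: "a \<in> supp h - {a0}"
    show "h a * DeltaB q a c = 0"
    proof (rule ccontr)
      assume "h a * DeltaB q a c \<noteq> 0"
      then have "DeltaB q a c \<noteq> 0" by auto
      from DeltaB_supp[OF this] have "degT c = snd a" "fst (fst c) = fst a" by auto
      then have "snd a = snd a0" "fst a = fst a0" using k a0 by (auto simp: c_def degT_def)
      then have "a = a0" by (simp add: prod_eq_iff)
      with a show False by auto
    qed
  qed
  also have "DeltaB q a0 c = cq q k"
  proof -
    have "a0 = (fst a0, Suc k)" using a0 k by (metis prod.collapse)
    then have "DeltaB q a0 c = DeltaB q (fst a0, Suc k) ((fst a0,1),(fst a0 + 1,k))" by (simp add: c_def)
    also have "\<dots> = cq q k" by (rule DeltaB_val)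
    finally show ?thesis .
  qed
  finally have "Delta q h c = h a0 * cq q k" by simp
  moreover have "h a0 \<noteq> 0" using a0 by (simp add: supp_def)
  moreover have "cq q k \<noteq> 0" using cq_nz[OF qa] .
  ultimately have "c \<in> supp (Delta q h)" by (simp add: supp_def)
  with G have "snd (fst c) = 0 \<or> snd (snd c) < m" by (simp add: Good_def)
  with k show False by (simp add: c_def)
qed

lemma grouplike:
  assumes gH: "g \<in> Hsp" and D: "\<forall>c. Delta q g c = g (fst c) * g (snd c)"
  shows "g \<in> Hle 0"
proof (rule ccontr)
  assume ng: "g \<notin> Hle 0"
  have fin: "finite (supp g)" using gH by (simp add: Hsp_def)
  from ng gH obtain b where b: "b \<in> supp g" "snd b > 0" by (auto simp: Hle_def)
  define M where "M = Max (snd ` supp g)"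
  have Mge: "\<forall>a\<in>supp g. snd a \<le> M" using fin by (auto simp: M_def)
  have "M \<in> snd ` supp g" using fin b(1) unfolding M_def by (intro Max_in) auto
  then obtain a0 where a0: "a0 \<in> supp g" "snd a0 = M" by auto
  have "M > 0" using Mge b by fastforce
  have "Delta q g (a0,a0) = (\<Sum>a\<in>supp g. g a * DeltaB q a (a0,a0))" by (simp add: Delta_def)
  also have "\<dots> = 0"
  proof (rule sum.neutral, rule ballI)
    fix a assume a: "a \<in> supp g"
    show "g a * DeltaB q a (a0,a0) = 0"
    proof (rule ccontr)
      assume "g a * DeltaB q a (a0,a0) \<noteq> 0"
      then have "DeltaB q a (a0,a0) \<noteq> 0" by auto
      from DeltaB_supp[OF this] have "degT (a0,a0) = snd a" by auto
      then have "M + M = snd a" using a0 by (simp add: degT_def)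
      with Mge a \<open>M > 0\<close> show False by fastforce
    qed
  qed
  finally have "g a0 * g a0 = 0" using D by simp
  with a0 show False by (simp add: supp_def)
qed

lemma Hsp_add: "f \<in> Hsp \<Longrightarrow> g \<in> Hsp \<Longrightarrow> (\<lambda>a. f a + g a) \<in> Hsp"
  unfolding Hsp_def by (auto intro: finite_subset[of _ "supp f \<union> supp g"] simp: supp_def)

lemma Hsp_sum: "finite A \<Longrightarrow> \<forall>i\<in>A. g i \<in> Hsp \<Longrightarrow> (\<lambda>x. \<Sum>i\<in>A. g i x) \<in> Hsp"
proof (induction A rule: finite_induct)
  case empty show ?case by (simp add: Hsp_def supp_def)
next
  case (insert i A) then show ?case by (simp add: Hsp_add)
qed

lemma phi_zero: "k_linear_on \<phi> \<Longrightarrow> \<phi> (\<lambda>x. 0) = (\<lambda>x. 0)"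
proof -
  assume "k_linear_on \<phi>"
  moreover have "(\<lambda>x. 0) \<in> Hsp" by (simp add: Hsp_def supp_def)
  ultimately have L: "\<forall>f\<in>Hsp. \<forall>c. \<phi> (\<lambda>a. c * f a) = (\<lambda>a. c * \<phi> f a)" "(\<lambda>x. 0) \<in> Hsp"
    unfolding k_linear_on_def by blast+
  from L(1)[rule_format, OF L(2), of 0] show ?thesis by simp
qed

lemma phi_sum: assumes lin: "k_linear_on \<phi>" shows "finite A \<Longrightarrow> \<forall>i\<in>A. g i \<in> Hsp \<Longrightarrow>
   \<phi> (\<lambda>x. \<Sum>i\<in>A. g i x) = (\<lambda>x. \<Sum>i\<in>A. \<phi> (g i) x)"
proof (induction A rule: finite_induct)
  case empty then show ?case by (simp add: phi_zero[OF lin])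
next
  case (insert i A)
  have s: "(\<lambda>x. \<Sum>j\<in>insert i A. g j x) = (\<lambda>x. g i x + (\<lambda>x. \<Sum>j\<in>A. g j x) x)"
    using insert by simp
  have G: "g i \<in> Hsp" "(\<lambda>x. \<Sum>j\<in>A. g j x) \<in> Hsp" using insert Hsp_sum by auto
  have L: "\<forall>f\<in>Hsp. \<forall>g\<in>Hsp. \<phi> (\<lambda>a. f a + g a) = (\<lambda>a. \<phi> f a + \<phi> g a)"
    using lin unfolding k_linear_on_def by blast
  have "\<phi> (\<lambda>x. g i x + (\<lambda>x. \<Sum>j\<in>A. g j x) x) = (\<lambda>x. \<phi> (g i) x + \<phi> (\<lambda>x. \<Sum>j\<in>A. g j x) x)"
    using L[rule_format, OF G] .
  then show ?case unfolding s using insert by simp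
qed

theorem lemma2p7:
  fixes q :: "'k::field" and \<phi> :: "(int \<times> nat \<Rightarrow> 'k) \<Rightarrow> (int \<times> nat \<Rightarrow> 'k)"
  assumes "q \<noteq> 0"
    and "\<forall>n::nat. n > 0 \<longrightarrow> q ^ n \<noteq> 1"
    and "\<phi> \<in> Aut0 q"
  shows "\<forall>m. \<phi> ` Hdeg m \<subseteq> Hle m"
proof -
  from assms(3) have lin: "k_linear_on \<phi>" and bij: "bij_betw \<phi> Hsp Hsp"
    and co: "\<forall>f\<in>Hsp. Delta q (\<phi> f) = tmap \<phi> (Delta q f)" by (auto simp: Aut0_def)
  have inH: "\<phi> f \<in> Hsp" if "f \<in> Hsp" for f using bij that bij_betwE by blast
  have basic: "\<forall>a. snd a = m \<longrightarrow> \<phi> (bas a) \<in> Hle m" for m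
  proof (induction m rule: less_induct)
    case (less m)
    show ?case
    proof (intro allI impI)
      fix a :: "int \<times> nat" assume am: "snd a = m"
      have D: "Delta q (\<phi> (bas a)) = tmap \<phi> (DeltaB q a)" using co bas_Hsp Delta_bas by metis
      show "\<phi> (bas a) \<in> Hle m"
      proof (cases "m = 0")
        case True
        obtain n where n: "a = (n,0)" using am True by (cases a) auto
        then have "Delta q (\<phi> (bas a)) = tmap \<phi> (bas ((n,0),(n,0)))" using D[unfolded n DeltaB_0] n by simp
        then have "\<forall>c. Delta q (\<phi> (bas a)) c = \<phi> (bas a) (fst c) * \<phi> (bas a) (snd c)"
          using n by (simp add: tmap_bas)
        then show ?thesis using grouplike[of "\<phi> (bas a)" q] inH[OF bas_Hsp] True by simp
      next
        case False
        have "Good m (Delta q (\<phi> (bas a)))"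
          unfolding Good_def
        proof
          fix c assume "c \<in> supp (Delta q (\<phi> (bas a)))"
          then have "tmap \<phi> (DeltaB q a) c \<noteq> 0" using D by (simp add: supp_def)
          then obtain p where p: "p \<in> supp (DeltaB q a)"
            "DeltaB q a p * \<phi> (bas (fst p)) (fst c) * \<phi> (bas (snd p)) (snd c) \<noteq> 0"
            unfolding tmap_def by (rule sum.not_neutral_contains_not_neutral)
          have dp: "degT p = m" using DeltaB_supp[of q a p] p(1) am by (simp add: supp_def)
          show "snd (fst c) = 0 \<or> snd (snd c) < m"
          proof (cases "snd (fst p) = 0")
            case True
            then have e: "fst p = (fst (fst p), 0)" by (metis prod.collapse)
            have "\<forall>a. \<phi> (bas (a, 0)) \<in> Hle 0" using less[of 0] False by simp
            then have "\<phi> (bas (fst p)) \<in> Hle 0" by (subst e) blast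
            moreover have "fst c \<in> supp (\<phi> (bas (fst p)))" using p(2) by (auto simp: supp_def)
            ultimately show ?thesis by (auto simp: Hle_def)
          next
            case False
            then have lt: "snd (snd p) < m" using dp by (simp add: degT_def)
            then have "\<phi> (bas (snd p)) \<in> Hle (snd (snd p))" using less by blast
            moreover have "snd c \<in> supp (\<phi> (bas (snd p)))" using p(2) by (auto simp: supp_def)
            ultimately show ?thesis using lt by (fastforce simp: Hle_def)
          qed
        qed
        then show ?thesis using Down[of "\<phi> (bas a)" m q] inH[OF bas_Hsp] assms(2) by blast
      qed
    qed
  qed
  show ?thesis
  proof (intro allI subsetI)
    fix m g assume "g \<in> \<phi> ` Hdeg m"
    then obtain h where h: "h \<in> Hdeg m" "g = \<phi> h" by blast
    have hH: "h \<in> Hsp" and hm: "\<forall>a\<in>supp h. snd a = m" using h(1) by (auto simp: Hdeg_def)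
    have fin: "finite (supp h)" using hH by (simp add: Hsp_def)
    have dec: "h = (\<lambda>x. \<Sum>a\<in>supp h. h a * bas a x)"
    proof
      fix x
      have "(\<Sum>a\<in>supp h. h a * bas a x) = (\<Sum>a\<in>supp h. if x = a then h a else 0)"
        by (rule sum.cong) (auto simp: bas_def)
      also have "\<dots> = h x" using fin by (simp add: supp_def)
      finally show "h x = (\<Sum>a\<in>supp h. h a * bas a x)" by simp
    qed
    have scal: "\<phi> (\<lambda>y. h a * bas a y) = (\<lambda>y. h a * \<phi> (bas a) y)" for a
      using lin bas_Hsp unfolding k_linear_on_def by blast
    have "\<phi> h = \<phi> (\<lambda>x. \<Sum>a\<in>supp h. h a * bas a x)" using arg_cong[of _ _ \<phi>, OF dec] .
    also have "\<dots> = (\<lambda>x. \<Sum>a\<in>supp h. \<phi> (\<lambda>y. h a * bas a y) x)"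
    proof (rule phi_sum[OF lin fin], rule ballI)
      fix a show "(\<lambda>y. h a * bas a y) \<in> Hsp"
        unfolding Hsp_def by (auto intro: finite_subset[of _ "{a}"] simp: supp_def bas_def)
    qed
    also have "\<dots> = (\<lambda>x. \<Sum>a\<in>supp h. h a * \<phi> (bas a) x)" by (simp add: scal)
    finally have ph: "\<phi> h = (\<lambda>x. \<Sum>a\<in>supp h. h a * \<phi> (bas a) x)" .
    show "g \<in> Hle m"
      unfolding Hle_def
    proof (intro CollectI conjI ballI)
      show "g \<in> Hsp" using h(2) inH[OF hH] by simp
      fix x assume "x \<in> supp g"
      then have "(\<Sum>a\<in>supp h. h a * \<phi> (bas a) x) \<noteq> 0" using h(2) ph by (simp add: supp_def)
      then obtain a where a: "a \<in> supp h" "h a * \<phi> (bas a) x \<noteq> 0"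
        by (rule sum.not_neutral_contains_not_neutral)
      have "\<phi> (bas a) \<in> Hle m" using basic hm a(1) by blast
      moreover have "x \<in> supp (\<phi> (bas a))" using a(2) by (simp add: supp_def)
      ultimately show "snd x \<le> m" by (simp add: Hle_def)
    qed
  qed
qed

end
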